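(* Let $v,w\in\mathbb C$, let $u\in\mathbb C$ satisfy $u^2=w$, and set $A=-\mathrm{Re}(v)$, $B=-\mathrm{Im}(u)$, $C=-\mathrm{Im}(v)$, $D=\mathrm{Re}(u)$, and assume $BC-AD\neq0$. Let $\Gamma=\{-v(1-\tau)^2\pm2\sqrt{-w(1-(1-\tau)^2)(1-\tau)^2}:\tau\in[0,1]\}$, which is an ellipse passing through the origin. Then the foci of $\Gamma$ are the two roots of $z^2+vz+w$, i.e. the two roots of $Q(z)=z(z^2+vz+w)$ different from the origin. *)

theory Defs
  imports Complex_Main
begin

definition ellipse_with_foci :: "complex \<Rightarrow> complex \<Rightarrow> complex set \<Rightarrow> bool" where
  "ellipse_with_foci f1 f2 E \<longleftrightarrow>
     (\<exists>a::real. cmod (f1 - f2) < 2 * a \<and> E = {z. cmod (z - f1) + cmod (z - f2) = 2 * a})"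

end

theory Submission
  imports Defs
begin

lemma para: fixes x y :: complex
  shows "cmod (x+y)^2 + cmod (x-y)^2 = 2*cmod x^2 + 2*cmod y^2"
  unfolding cmod_power2 by (simp add: power2_eq_square algebra_simps)

lemma key:
  fixes p q f e :: complex
  assumes f2: "f^2 = 4*p*q" and e: "cmod e = 1"
  shows "cmod (p*e + q*cnj e - f) + cmod (p*e + q*cnj e + f) = 2*(cmod p + cmod q)"
proof -
  define w where "w = p*e+q*cnj e"
  have ee: "e * cnj e = 1"
    using complex_norm_square[of e] e by simp
  have "(p*e - q*cnj e)^2 = w^2 - 4*p*q*(e*cnj e)"
    unfolding w_def by (simp add: power2_eq_square algebra_simps)
  hence h1: "w^2 - f^2 = (p*e - q*cnj e)^2" using ee f2 by simp
  have h2: "cmod (w-f) * cmod (w+f) = cmod (p*e - q*cnj e)^2"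
  proof -
    have "cmod (w-f) * cmod (w+f) = cmod ((w-f)*(w+f))" by (simp add: norm_mult)
    also have "(w-f)*(w+f) = w^2 - f^2" by (simp add: power2_eq_square algebra_simps)
    finally show ?thesis using h1 by (simp add: norm_power)
  qed
  have h3: "cmod (w-f)^2 + cmod(w+f)^2 = 2*cmod w^2 + 2*cmod f^2"
    using para[of w f] by simp
  have h4: "cmod w^2 + cmod (p*e-q*cnj e)^2 = 2*cmod p^2 + 2*cmod q^2"
    using para[of "p*e" "q*cnj e"] e unfolding w_def by (simp add: norm_mult)
  have h5: "cmod f^2 = 4*cmod p*cmod q"
  proof -
    have "cmod f^2 = cmod (f^2)" by (simp add: norm_power)
    also have "\<dots> = 4*cmod p*cmod q" using f2 by (simp add: norm_mult)
    finally show ?thesis .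
  qed
  have "(cmod (w-f) + cmod (w+f))^2 = (2*(cmod p + cmod q))^2"
    using h2 h3 h4 h5 by (simp add: power2_eq_square algebra_simps)
  hence "cmod (w-f) + cmod (w+f) = 2*(cmod p + cmod q)"
    by (rule power2_eq_imp_eq) auto
  thus ?thesis unfolding w_def .
qed

lemma scale:
  fixes f w0 :: complex and K l :: real
  assumes g: "cmod (w0 - f) + cmod (w0 + f) = K" and fk: "2*cmod f < K"
    and l: "0 \<le> l" "l \<noteq> 1"
  shows "cmod (of_real l * w0 - f) + cmod (of_real l * w0 + f) \<noteq> K"
proof (cases "l < 1")
  case True
  have a: "cmod (of_real l * w0 - f) \<le> l * cmod (w0 - f) + (1-l) * cmod f"
  proof -
    have "of_real l * w0 - f = of_real l * (w0 - f) + of_real (1-l) * (-f)"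
      by (simp add: algebra_simps)
    hence "cmod (of_real l * w0 - f) \<le> cmod (of_real l * (w0 - f)) + cmod (of_real (1-l) * (-f))"
      by (metis norm_triangle_ineq)
    thus ?thesis using l True by (simp add: norm_mult del: of_real_diff)
  qed
  have b: "cmod (of_real l * w0 + f) \<le> l * cmod (w0 + f) + (1-l) * cmod f"
  proof -
    have "of_real l * w0 + f = of_real l * (w0 + f) + of_real (1-l) * f"
      by (simp add: algebra_simps)
    hence "cmod (of_real l * w0 + f) \<le> cmod (of_real l * (w0 + f)) + cmod (of_real (1-l) * f)"
      by (metis norm_triangle_ineq)
    thus ?thesis using l True by (simp add: norm_mult del: of_real_diff)
  qed
  have "l * K + (1-l) * (2*cmod f) < K"
  proof -
    have "(1-l) * (2*cmod f) < (1-l) * K" using fk True by simp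
    thus ?thesis by (simp add: algebra_simps)
  qed
  moreover have "l * cmod (w0 - f) + l * cmod (w0 + f) = l * K"
    using g by (simp add: distrib_left[symmetric])
  ultimately show ?thesis using a b by linarith
next
  case False
  hence l1: "l > 1" using l by simp
  define z where "z = of_real l * w0"
  have w0z: "w0 = of_real (1/l) * z + of_real (1 - 1/l) * 0" using l1 unfolding z_def by simp
  have a: "cmod (w0 - f) \<le> (1/l) * cmod (z - f) + (1-1/l) * cmod f"
  proof -
    have "w0 - f = of_real (1/l) * (z - f) + of_real (1-1/l) * (-f)"
      using l1 unfolding z_def by (simp add: algebra_simps)
    hence "cmod (w0 - f) \<le> cmod (of_real (1/l) * (z - f)) + cmod (of_real (1-1/l) * (-f))"
      by (metis norm_triangle_ineq)
    thus ?thesis using l1 by (simp add: norm_mult norm_divide del: of_real_diff)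
  qed
  have b: "cmod (w0 + f) \<le> (1/l) * cmod (z + f) + (1-1/l) * cmod f"
  proof -
    have "w0 + f = of_real (1/l) * (z + f) + of_real (1-1/l) * f"
      using l1 unfolding z_def by (simp add: algebra_simps)
    hence "cmod (w0 + f) \<le> cmod (of_real (1/l) * (z + f)) + cmod (of_real (1-1/l) * f)"
      by (metis norm_triangle_ineq)
    thus ?thesis using l1 by (simp add: norm_mult norm_divide del: of_real_diff)
  qed
  show ?thesis
  proof
    assume "cmod (of_real l * w0 - f) + cmod (of_real l * w0 + f) = K"
    hence "cmod (z - f) + cmod (z + f) = K" unfolding z_def .
    moreover have "(1/l) * cmod (z - f) + (1/l) * cmod (z + f) = (1/l) * K"
      using calculation by (simp add: add_divide_distrib[symmetric])
    ultimately have "K \<le> (1/l) * K + (1 - 1/l) * (2 * cmod f)" using a b g by linarith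
    moreover have "(1/l) * K + (1 - 1/l) * (2 * cmod f) < K"
    proof -
      have "0 < 1 - 1/l" using l1 by simp
      hence "(1 - 1/l) * (2 * cmod f) < (1 - 1/l) * K" using fk by simp
      thus ?thesis by (simp add: algebra_simps)
    qed
    ultimately show False by simp
  qed
qed


lemma csq:
  fixes u :: complex and r :: real
  shows "csqrt (-(u^2) * of_real (r^2)) = \<i>*u*of_real r \<or> csqrt (-(u^2) * of_real (r^2)) = -(\<i>*u*of_real r)"
proof -
  have "(csqrt (-(u^2) * of_real (r^2)))^2 = (\<i>*u*of_real r)^2"
    by (simp only: power2_csqrt) (simp add: power_mult_distrib)
  thus ?thesis by (simp only: power2_eq_iff)
qed

lemma ident:
  fixes u v :: complex and x y :: real
  shows "(v/2+u)/2*Complex x y + (v/2-u)/2*cnj (Complex x y) = v/2*of_real x + \<i>*u*of_real y"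
  unfolding Complex_eq by (simp add: field_simps)

lemma cmod_Complex1:
  fixes x y :: real assumes "x^2 + y^2 = 1" shows "cmod (Complex x y) = 1"
  using assms by (simp add: complex_norm)

lemma fwd:
  fixes u v s :: complex and T :: real
  assumes T: "0 \<le> T" "T \<le> 1" and s: "s \<in> {1,-1}"
  shows "\<exists>e. cmod e = 1 \<and> -v*of_real T + s*2*csqrt(-(u^2)*(1-of_real T)*of_real T)
           = -v/2 + (v/2+u)/2*e + (v/2-u)/2*cnj e"
proof -
  define r where "r = sqrt ((1-T)*T)"
  have r2: "r^2 = (1-T)*T" unfolding r_def using T by simp
  have arg: "-(u^2)*(1-of_real T)*of_real T = -(u^2) * of_real (r^2)"
    using r2 by simp
  define K where "K = csqrt(-(u^2)*(1-of_real T)*of_real T)"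
  have K: "K = \<i>*u*of_real r \<or> K = -(\<i>*u*of_real r)" unfolding K_def arg by (rule csq)
  define sg :: real where "sg = (if (s = 1) = (K = \<i>*u*of_real r) then 1 else -1)"
  have sg: "sg \<in> {1,-1}" unfolding sg_def by auto
  have sK: "s*csqrt(-(u^2)*(1-of_real T)*of_real T) = of_real sg * (\<i>*u*of_real r)"
    unfolding K_def[symmetric] using s K unfolding sg_def by auto
  define e where "e = Complex (1-2*T) (2*sg*r)"
  have "(1-2*T)^2 + (2*sg*r)^2 = 1"
    using sg r2 by (auto simp: power2_eq_square algebra_simps)
  hence e1: "cmod e = 1" unfolding e_def by (rule cmod_Complex1)
  have "-v/2 + (v/2+u)/2*e + (v/2-u)/2*cnj e = -v/2 + ((v/2+u)/2*e + (v/2-u)/2*cnj e)"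
    by (simp add: add.assoc)
  also have "\<dots> = -v/2 + (v/2*of_real (1-2*T) + \<i>*u*of_real (2*sg*r))"
    unfolding e_def ident ..
  finally have "-v/2 + (v/2+u)/2*e + (v/2-u)/2*cnj e = -v/2 + (v/2*of_real (1-2*T) + \<i>*u*of_real (2*sg*r))" .
  also have "\<dots> = -v*of_real T + 2*(of_real sg * (\<i>*u*of_real r))"
    by (simp add: algebra_simps)
  also have "\<dots> = -v*of_real T + s*2*csqrt(-(u^2)*(1-of_real T)*of_real T)"
    using sK by (simp add: algebra_simps)
  finally show ?thesis using e1 by metis
qed

lemma bwd:
  fixes u v e :: complex
  assumes e: "cmod e = 1"
  shows "\<exists>\<tau> s. \<tau> \<in> {0..1} \<and> s \<in> {1,-1} \<and> -v/2 + (v/2+u)/2*e + (v/2-u)/2*cnj e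
      = -v*(1-of_real \<tau>)^2 + s*2*csqrt(-(u^2)*(1-(1-of_real \<tau>)^2)*(1-of_real \<tau>)^2)"
proof -
  define x where "x = Re e"
  define y where "y = Im e"
  have xy: "x^2 + y^2 = 1" using e unfolding x_def y_def by (simp add: cmod_power2[symmetric])
  hence "x^2 \<le> 1" by (metis le_add_same_cancel1 zero_le_power2)
  hence "\<bar>x\<bar> \<le> 1" by (simp only: abs_square_le_1)
  hence xb: "-1 \<le> x" "x \<le> 1" by linarith+
  define T where "T = (1-x)/2"
  have T: "0 \<le> T" "T \<le> 1" unfolding T_def using xb by auto
  define \<tau> where "\<tau> = 1 - sqrt T"
  have \<tau>: "\<tau> \<in> {0..1}" unfolding \<tau>_def using T by auto
  have tT: "(1-of_real \<tau>)^2 = (of_real T :: complex)"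
  proof -
    have "(1-of_real \<tau>)^2 = (of_real ((sqrt T)^2) :: complex)" unfolding \<tau>_def by simp
    thus ?thesis using T by simp
  qed
  define r where "r = \<bar>y\<bar>/2"
  have r2: "r^2 = (1-T)*T"
  proof -
    have "r^2 = y^2/4" unfolding r_def by (simp add: power_divide power2_abs)
    also have "y^2 = 1 - x^2" using xy by simp
    also have "(1 - x^2)/4 = (1-T)*T" unfolding T_def by (simp add: power2_eq_square field_simps)
    finally show ?thesis .
  qed
  have arg: "-(u^2)*(1-(1-of_real \<tau>)^2)*(1-of_real \<tau>)^2 = -(u^2) * of_real (r^2)"
    unfolding tT r2 by simp
  define sg :: real where "sg = (if y \<ge> 0 then 1 else -1)"
  have sgy: "sg * \<bar>y\<bar> = y" unfolding sg_def by auto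
  define K where "K = csqrt(-(u^2)*(1-(1-of_real \<tau>)^2)*(1-of_real \<tau>)^2)"
  have K: "K = \<i>*u*of_real r \<or> K = -(\<i>*u*of_real r)" unfolding K_def arg by (rule csq)
  define s :: complex where "s = (if (sg = 1) = (K = \<i>*u*of_real r) then 1 else -1)"
  have s: "s \<in> {1,-1}" unfolding s_def by auto
  have sgv: "sg = 1 \<or> sg = -1" unfolding sg_def by auto
  have sK: "s*K = of_real sg * (\<i>*u*of_real r)"
    using sgv K unfolding s_def by auto
  have ee: "e = Complex x y" unfolding x_def y_def by simp
  have "-v/2 + (v/2+u)/2*e + (v/2-u)/2*cnj e = -v/2 + ((v/2+u)/2*e + (v/2-u)/2*cnj e)"
    by (simp add: add.assoc)
  also have "\<dots> = -v/2 + (v/2*of_real x + \<i>*u*of_real y)"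
    unfolding ee ident ..
  also have "\<dots> = -v*of_real T + 2*(of_real sg * (\<i>*u*of_real r))"
  proof -
    have "y = 2 * (sg * r)" unfolding r_def using sgy by simp
    hence yeq: "(of_real y::complex) = 2 * (of_real sg * of_real r)" by (metis of_real_mult of_real_numeral)
    have Teq: "(of_real T::complex) = (1 - of_real x)/2" unfolding T_def by simp
    show ?thesis unfolding Teq yeq by (simp add: field_simps)
  qed
  also have "\<dots> = -v*(1-of_real \<tau>)^2 + s*2*K"
    using sK tT by (simp add: algebra_simps)
  finally show ?thesis using \<tau> s unfolding K_def by blast
qed


lemma amgm: "(P::real) \<ge> 0 \<Longrightarrow> Q \<ge> 0 \<Longrightarrow> P \<noteq> Q \<Longrightarrow> 4*P*Q < (P+Q)^2"
proof -
  assume "P \<noteq> Q"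
  hence "(P-Q)^2 > 0" by simp
  thus ?thesis by (simp add: power2_eq_square algebra_simps)
qed
lemma sqless: "0 \<le> A \<Longrightarrow> (x::real)^2 < A^2 \<Longrightarrow> 0 \<le> x \<Longrightarrow> x < A"
  using power_less_imp_less_base by blast
lemma solve: fixes v u W :: complex
  assumes D: "D \<noteq> 0" and Dd: "D = Re v/2 * Re u + Im v/2 * Im u"
  shows "W = v/2*of_real ((Re W * Re u + Im W * Im u)/D) + \<i>*u*of_real ((Re v/2 * Im W - Im v/2 * Re W)/D)"
proof (rule complex_eqI)
  have e1: "Re v/2*(Re W * Re u + Im W * Im u) - Im u*(Re v/2 * Im W - Im v/2 * Re W) = Re W * D"
    unfolding Dd by (simp add: algebra_simps)
  have e2: "Im v/2*(Re W * Re u + Im W * Im u) + Re u*(Re v/2 * Im W - Im v/2 * Re W) = Im W * D"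
    unfolding Dd by (simp add: algebra_simps)
  show "Re W = Re (v/2*of_real ((Re W * Re u + Im W * Im u)/D) + \<i>*u*of_real ((Re v/2 * Im W - Im v/2 * Re W)/D))"
  proof -
    have "Re (v/2*of_real ((Re W * Re u + Im W * Im u)/D) + \<i>*u*of_real ((Re v/2 * Im W - Im v/2 * Re W)/D))
      = (Re v/2*(Re W * Re u + Im W * Im u) - Im u*(Re v/2 * Im W - Im v/2 * Re W))/D"
      by (simp add: diff_divide_distrib right_diff_distrib)
    thus ?thesis using D e1 by simp
  qed
  show "Im W = Im (v/2*of_real ((Re W * Re u + Im W * Im u)/D) + \<i>*u*of_real ((Re v/2 * Im W - Im v/2 * Re W)/D))"
  proof -
    have "Im (v/2*of_real ((Re W * Re u + Im W * Im u)/D) + \<i>*u*of_real ((Re v/2 * Im W - Im v/2 * Re W)/D))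
      = (Im v/2*(Re W * Re u + Im W * Im u) + Re u*(Re v/2 * Im W - Im v/2 * Re W))/D"
      by (simp add: add_divide_distrib diff_divide_distrib right_diff_distrib distrib_left)
    thus ?thesis using D e2 by simp
  qed
qed
lemma rescale: fixes v u :: complex and x y r :: real assumes "r > 0"
  shows "v/2*of_real x + \<i>*u*of_real y = of_real r * (v/2*of_real (x/r) + \<i>*u*of_real (y/r))"
  using assms by (simp add: field_simps)

lemma pq_lem: fixes u v :: complex
  assumes "(- Im u) * (- Im v) - (- Re v) * Re u \<noteq> 0"
  shows "cmod ((v/2+u)/2) \<noteq> cmod ((v/2-u)/2)"
proof
  assume "cmod ((v/2+u)/2) = cmod ((v/2-u)/2)"
  hence "cmod ((v/2+u)/2) ^2 = cmod ((v/2-u)/2) ^2" by simp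
  hence "(Re v/2 + Re u)^2 + (Im v/2 + Im u)^2 = (Re v/2 - Re u)^2 + (Im v/2 - Im u)^2"
    unfolding cmod_power2 by (simp add: power_divide)
  hence "Re v * Re u + Im v * Im u = 0"
    by (simp add: power2_eq_square algebra_simps)
  thus False using assms by (simp add: algebra_simps)
qed

theorem lemma2p3:
  fixes v w u r1 r2 :: complex
  assumes "u ^ 2 = w"
    and "(- Im u) * (- Im v) - (- Re v) * Re u \<noteq> 0"
    and "\<forall>z. z ^ 2 + v * z + w = (z - r1) * (z - r2)"
  shows "0 \<in> {- v * (1 - complex_of_real \<tau>) ^ 2 + s * 2 *
                  csqrt (- w * (1 - (1 - complex_of_real \<tau>) ^ 2) * (1 - complex_of_real \<tau>) ^ 2)
                | \<tau> s. \<tau> \<in> {0..1} \<and> s \<in> {1, -1}}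
       \<and> ellipse_with_foci r1 r2
          {- v * (1 - complex_of_real \<tau>) ^ 2 + s * 2 *
                  csqrt (- w * (1 - (1 - complex_of_real \<tau>) ^ 2) * (1 - complex_of_real \<tau>) ^ 2)
                | \<tau> s. \<tau> \<in> {0..1} \<and> s \<in> {1, -1}}"
proof -
  define S where "S = {- v * (1 - complex_of_real \<tau>) ^ 2 + s * 2 *
                  csqrt (- w * (1 - (1 - complex_of_real \<tau>) ^ 2) * (1 - complex_of_real \<tau>) ^ 2)
                | \<tau> s. \<tau> \<in> {0..1} \<and> s \<in> {1, -1}}"
  have w: "w = u^2" using assms(1) by simp
  have rr: "r1 * r2 = w" using spec[OF assms(3), of 0] by simp
  have rs: "r1 + r2 = -v"
  proof -
    have "1 + v + w = (1 - r1) * (1 - r2)" using spec[OF assms(3), of 1] by simp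
    thus ?thesis using rr by algebra
  qed
  define c where "c = -v/2"
  define p where "p = (v/2+u)/2"
  define q where "q = (v/2-u)/2"
  define f where "f = r1 - c"
  have r2f: "r2 = c - f"
  proof -
    have "r2 = -v - r1" using rs by algebra
    moreover have "-v/2 - (r1 - -v/2) = -v - r1" by (simp add: field_simps)
    ultimately show ?thesis unfolding f_def c_def by simp
  qed
  have f2: "f^2 = 4*p*q"
  proof -
    have h: "r1^2 + v*r1 + u^2 = 0" using spec[OF assms(3), of r1] w by simp
    have "(r1 - -v/2)^2 = (r1^2 + v*r1 + u^2) + (v^2/4 - u^2)" by (simp add: power2_eq_square field_simps)
    also have "4*((v/2+u)/2)*((v/2-u)/2) = v^2/4 - u^2" by (simp add: power2_eq_square field_simps)
    ultimately show ?thesis using h unfolding f_def c_def p_def q_def by simp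
  qed
  define A where "A = cmod p + cmod q"
  have pq: "cmod p \<noteq> cmod q" unfolding p_def q_def by (rule pq_lem[OF assms(2)])
  have fA: "cmod f < A"
  proof -
    have "cmod f ^2 = cmod (f^2)" by (simp add: norm_power)
    also have "\<dots> = 4 * cmod p * cmod q" using f2 by (simp add: norm_mult)
    also have "\<dots> < A^2" unfolding A_def by (rule amgm[OF _ _ pq]) auto
    finally have fA2: "cmod f^2 < A^2" .
    show ?thesis by (rule sqless[OF _ fA2]) (auto simp: A_def)
  qed
  have zero: "0 \<in> S" unfolding S_def
    by (rule CollectI, rule exI[of _ 1], rule exI[of _ 1]) simp
  have sub1: "S \<subseteq> {z. cmod (z - r1) + cmod (z - r2) = 2*A}"
  proof
    fix z assume "z \<in> S"
    then obtain \<tau> s where \<tau>: "\<tau> \<in> {0..1}" and s: "s \<in> {1,-1}" and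
      z: "z = - v * (1 - complex_of_real \<tau>) ^ 2 + s * 2 *
                  csqrt (- w * (1 - (1 - complex_of_real \<tau>) ^ 2) * (1 - complex_of_real \<tau>) ^ 2)"
      unfolding S_def by blast
    define T where "T = (1-\<tau>)^2"
    have T: "0 \<le> T" "T \<le> 1" unfolding T_def using \<tau> by (auto simp: power_le_one)
    have tT: "(1 - complex_of_real \<tau>)^2 = of_real T" unfolding T_def by simp
    have "z = -v*of_real T + s*2*csqrt(-(u^2)*(1-of_real T)*of_real T)"
      unfolding z tT w by simp
    with fwd[OF T s, of v u] obtain e where e: "cmod e = 1" and ze: "z = c + p*e + q*cnj e"
      unfolding c_def p_def q_def by auto
    have "cmod (z - r1) + cmod (z - r2) = cmod (p*e + q*cnj e - f) + cmod (p*e + q*cnj e + f)"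
      unfolding ze f_def r2f by (simp add: algebra_simps)
    also have "\<dots> = 2*A" unfolding A_def by (rule key[OF f2 e])
    finally show "z \<in> {z. cmod (z - r1) + cmod (z - r2) = 2*A}" by simp
  qed
  have sub2: "{z. cmod (z - r1) + cmod (z - r2) = 2*A} \<subseteq> S"
  proof
    fix z assume "z \<in> {z. cmod (z - r1) + cmod (z - r2) = 2*A}"
    hence zA: "cmod ((z - c) - f) + cmod ((z - c) + f) = 2*A"
      unfolding f_def r2f by (simp add: algebra_simps)
    define W where "W = z - c"
    define D where "D = Re v/2 * Re u + Im v/2 * Im u"
    have D: "D \<noteq> 0" unfolding D_def using assms(2) by (simp add: algebra_simps)
    define x where "x = (Re W * Re u + Im W * Im u)/D"
    define y where "y = (Re v/2 * Im W - Im v/2 * Re W)/D"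
    have Wxy: "W = v/2*of_real x + \<i>*u*of_real y"
      unfolding x_def y_def by (rule solve[OF D D_def])
    define \<rho> where "\<rho> = cmod (Complex x y)"
    have W0: "W \<noteq> 0"
    proof
      assume "W = 0"
      hence "2 * cmod f = 2*A" using zA unfolding W_def by simp
      thus False using fA by simp
    qed
    have \<rho>: "\<rho> > 0"
    proof -
      have "Complex x y \<noteq> 0" using W0 Wxy by (auto simp: complex_eq_iff)
      thus ?thesis unfolding \<rho>_def by simp
    qed
    define e0 where "e0 = Complex (x/\<rho>) (y/\<rho>)"
    have e0: "cmod e0 = 1"
    proof -
      have "(x/\<rho>)^2 + (y/\<rho>)^2 = (x^2+y^2)/\<rho>^2" by (simp add: power_divide add_divide_distrib)
      also have "x^2+y^2 = \<rho>^2" unfolding \<rho>_def by (simp add: cmod_power2)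
      also have "\<rho>^2/\<rho>^2 = 1" using \<rho> by simp
      finally show ?thesis unfolding e0_def by (rule cmod_Complex1)
    qed
    have We: "W = of_real \<rho> * (p*e0 + q*cnj e0)"
      unfolding p_def q_def e0_def ident Wxy using \<rho> by (rule rescale)
    have g1: "cmod (p*e0 + q*cnj e0 - f) + cmod (p*e0 + q*cnj e0 + f) = 2*A"
      unfolding A_def by (rule key[OF f2 e0])
    have "\<rho> = 1"
    proof (rule ccontr)
      assume "\<rho> \<noteq> 1"
      from scale[OF g1 _ _ this] fA \<rho> zA show False unfolding W_def[symmetric] We by simp
    qed
    hence ez: "z = c + p*Complex x y + q*cnj (Complex x y)" and e1: "cmod (Complex x y) = 1"
      using We unfolding W_def e0_def \<rho>_def by (simp_all add: algebra_simps)
    from bwd[OF e1, of v u] obtain \<tau> s where "\<tau> \<in> {0..1}" "s \<in> {1,-1}"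
      "z = -v*(1-of_real \<tau>)^2 + s*2*csqrt(-(u^2)*(1-(1-of_real \<tau>)^2)*(1-of_real \<tau>)^2)"
      unfolding ez c_def p_def q_def by (auto simp: add.assoc)
    thus "z \<in> S" unfolding S_def w by blast
  qed
  have "ellipse_with_foci r1 r2 S"
    unfolding ellipse_with_foci_def
  proof (intro exI conjI)
    have "r1 - r2 = 2*f" unfolding r2f f_def by simp
    hence "cmod (r1 - r2) = 2 * cmod f" by (simp add: norm_mult)
    thus "cmod (r1 - r2) < 2*A" using fA by simp
    show "S = {z. cmod (z - r1) + cmod (z - r2) = 2*A}" using sub1 sub2 by blast
  qed
  thus ?thesis using zero unfolding S_def by blast
qed

end
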